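(* Let $C\in\mathbb{R}^{n\times n}$ be symmetric and let $Z$ be an optimal solution of $$\max_{Z}\ \langle C,Z\rangle\quad\text{s.t. } Z_{ii}=1\ (i=1,\dots,n),\ Z\succeq0.$$ Define $w\in\mathbb{R}^n$ by $w_i=\dfrac{Z_i^TZC_i}{Z_i^TZ_i}$ for $i=1,\dots,n$. Then $w$ is an optimal solution of $$\min_{w\in\mathbb{R}^n}\ \mathbf{1}^Tw\quad\text{s.t. } \operatorname{Diag}(w)\succeq C.$$
   Context: $Z_i$ and $C_i$ denote the $i$-th columns of $Z$ and $C$ (equivalently rows, by symmetry); $\operatorname{Diag}(w)$ is the diagonal matrix with diagonal $w$; $\langle C,Z\rangle=\operatorname{tr}(CZ)$; $\mathbf 1$ is the all-ones vector. *)

theory Defs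
  imports "HOL-Analysis.Analysis"
begin

definition psd :: "real^'n^'n \<Rightarrow> bool" where
  "psd A \<longleftrightarrow> transpose A = A \<and> (\<forall>x. 0 \<le> x \<bullet> (A *v x))"

definition Diag :: "real^'n \<Rightarrow> real^'n^'n" where
  "Diag w = (\<chi> i j. if i = j then w $ i else 0)"

text \<open>Frobenius inner product of symmetric matrices, as tr(CZ).\<close>
definition frob :: "real^'n^'n \<Rightarrow> real^'n^'n \<Rightarrow> real" where
  "frob C Z = trace (C ** Z)"

definition sdp_feasible :: "real^'n^'n \<Rightarrow> bool" where
  "sdp_feasible Z \<longleftrightarrow> (\<forall>i. Z $ i $ i = 1) \<and> psd Z"

end

theory Submission
  imports Defs
begin


lemma bil: "x \<bullet> (A *v y) = (\<Sum>i\<in>UNIV. \<Sum>j\<in>UNIV. x$i * A$i$j * y$j)"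
  by (simp add: inner_vec_def matrix_vector_mult_def sum_distrib_left mult.assoc)

lemma sum_if_P: "(\<Sum>j\<in>S. if P then f j else 0) = (if P then sum f S else 0)" by simp

lemma psd_sym: "psd A \<Longrightarrow> A$i$j = A$j$i"
  unfolding psd_def by (metis transpose_def vec_lambda_beta)

lemma bil_sym: assumes "psd A" shows "y \<bullet> (A *v x) = x \<bullet> (A *v y)"
proof -
  have "y \<bullet> (A *v x) = (\<Sum>i\<in>UNIV. \<Sum>j\<in>UNIV. y$i * A$i$j * x$j)" by (rule bil)
  also have "\<dots> = (\<Sum>j\<in>UNIV. \<Sum>i\<in>UNIV. y$i * A$i$j * x$j)" by (rule sum.swap)
  also have "\<dots> = (\<Sum>j\<in>UNIV. \<Sum>i\<in>UNIV. x$j * A$j$i * y$i)"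
    using psd_sym[OF assms] by (simp add: mult.commute mult.left_commute)
  also have "\<dots> = x \<bullet> (A *v y)" by (rule bil[symmetric])
  finally show ?thesis .
qed

lemma quad_add: assumes "psd A"
  shows "(x + y) \<bullet> (A *v (x + y)) = x \<bullet> (A *v x) + 2 * (y \<bullet> (A *v x)) + y \<bullet> (A *v y)"
  using bil_sym[OF assms, of y x]
  by (simp add: matrix_vector_right_distrib inner_add_left inner_add_right)

lemma quad_scale: "(c *\<^sub>R x) \<bullet> ((A::real^'n^'n) *v (c *\<^sub>R y)) = c * c * (x \<bullet> (A *v y))"
  by (simp add: bil sum_distrib_left algebra_simps)

lemma axis_quad: "axis k 1 \<bullet> (A *v axis k 1) = (A::real^'n^'n)$k$k"
proof -
  have e: "\<And>i j. (if i = k then 1 else 0) * A$i$j * (if j = k then 1 else 0) = (if i = k then (if j = k then A$i$j else 0) else (0::real))" by simp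
  show ?thesis  by (simp add: bil axis_def e sum_if_P)
qed

lemma axis_bil: "axis k 1 \<bullet> ((A::real^'n^'n) *v x) = (\<Sum>j\<in>UNIV. A$k$j * x$j)"
proof -
  have e: "\<And>i j. (if i = k then 1 else 0) * A$i$j * x$j = (if i = k then A$i$j * x$j else (0::real))" by simp
  show ?thesis  by (simp add: bil axis_def e sum_if_P)
qed

lemma psd_diag_nonneg: assumes "psd A" shows "0 \<le> A$k$k"
  using assms psd_def axis_quad by metis

lemma psd_kernel: assumes "psd A" "x \<bullet> (A *v x) = 0" shows "A *v x = 0"
proof (rule ccontr)
  assume ne: "A *v x \<noteq> 0"
  define y where "y = A *v x"
  define c where "c = y \<bullet> (A *v y)"
  have c0: "0 \<le> c" using assms(1) psd_def c_def by blast
  have yy: "0 < y \<bullet> y" using ne y_def by simp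
  define t where "t = (y \<bullet> y) / (c + 1)"
  have t0: "0 < t" using yy c0 t_def by simp
  have tc: "t * c \<le> y \<bullet> y" unfolding t_def using c0 yy
    by (simp add: field_simps)
  have "0 \<le> (x + (-t) *\<^sub>R y) \<bullet> (A *v (x + (-t) *\<^sub>R y))" using assms(1) psd_def by blast
  also have "\<dots> = -2 * t * (y \<bullet> y) + t * t * c"
    using quad_add[OF assms(1), of x "(-t) *\<^sub>R y"] assms(2) quad_scale[of "-t" y A y]
    by (simp add: c_def y_def)
  also have "\<dots> = t * (t * c - 2 * (y \<bullet> y))" by (simp add: algebra_simps)
  also have "\<dots> < 0"
  proof -
    have "t * c - 2 * (y \<bullet> y) < 0" using tc yy by linarith
    thus ?thesis using t0 by (intro mult_pos_neg)
  qed
  finally show False by simp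
qed

lemma psd_zero_diag: assumes "psd A" "A$k$k = 0" shows "A$k$j = 0"
proof -
  have "A *v axis k 1 = 0" using psd_kernel[OF assms(1)] axis_quad assms(2) by metis
  hence "(A *v axis k 1)$j = 0" by simp
  hence "A$j$k = 0" by (simp add: matrix_vector_mult_def axis_def if_distrib[of "\<lambda>x. _ * x"] cong: if_cong)
  thus ?thesis using psd_sym[OF assms(1)] by metis
qed



lemma schur_psd:
  fixes B :: "real^'n^'n"
  assumes B: "psd B" and a: "0 < B$k$k"
  shows "psd (B - (\<chi> i j. B$k$i * B$k$j / B$k$k))"
proof -
  define a where "a = B$k$k"
  define b where "b = (\<chi> j. B$k$j)"
  define M where "M = (\<chi> i j. B$k$i * B$k$j / B$k$k)"
  have Mq: "x \<bullet> (M *v x) = (b \<bullet> x)^2 / a" for x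
  proof -
    have "x \<bullet> (M *v x) = (\<Sum>i\<in>UNIV. \<Sum>j\<in>UNIV. (x$i * b$i) * (b$j * x$j) / a)"
      by (simp add: bil M_def b_def a_def algebra_simps)
    also have "\<dots> = (\<Sum>i\<in>UNIV. x$i * b$i) * (\<Sum>j\<in>UNIV. b$j * x$j) / a"
      by (simp add: sum_product sum_divide_distrib)
    also have "\<dots> = (b \<bullet> x)^2 / a"
      by (simp add: inner_vec_def power2_eq_square mult.commute)
    finally show ?thesis .
  qed
  have sym: "transpose (B - M) = B - M"
    using psd_sym[OF B] by (simp add: vec_eq_iff transpose_def M_def mult.commute)
  have "0 \<le> x \<bullet> ((B - M) *v x)" for x
  proof -
    define s where "s = - (b \<bullet> x) / a"
    have ax: "axis k 1 \<bullet> (B *v x) = b \<bullet> x"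
      unfolding axis_bil by (simp add: b_def inner_vec_def mult.commute)
    have "0 \<le> (x + s *\<^sub>R axis k 1) \<bullet> (B *v (x + s *\<^sub>R axis k 1))" using B psd_def by blast
    also have "\<dots> = x \<bullet> (B *v x) + 2 * s * (b \<bullet> x) + s * s * a"
      using quad_add[OF B, of x "s *\<^sub>R axis k 1"] quad_scale[of s "axis k 1" B "axis k 1"]
        axis_quad[of k B] ax
      by (simp add: a_def)
    also have "\<dots> = x \<bullet> (B *v x) - (b \<bullet> x)^2 / a"
      using a unfolding s_def a_def by (simp add: field_simps power2_eq_square)
    also have "\<dots> = x \<bullet> ((B - M) *v x)"
      by (simp add: Mq matrix_vector_mult_diff_rdistrib inner_diff_right)
    finally show ?thesis .
  qed
  thus ?thesis using sym unfolding psd_def M_def by blast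
qed



lemma gram_aux:
  fixes S :: "'n::finite set"
  shows "finite S \<Longrightarrow> \<forall>B::real^'n^'n. psd B \<and> (\<forall>k j. k \<notin> S \<longrightarrow> B$k$j = 0) \<longrightarrow>
    (\<exists>u::'n \<Rightarrow> real^'n. (\<forall>k. k \<notin> S \<longrightarrow> u k = 0) \<and> (\<forall>i j. B$i$j = (\<Sum>m\<in>UNIV. u m $ i * u m $ j)))"
proof (induction S rule: finite_induct)
  case empty
  show ?case
  proof (intro allI impI)
    fix B :: "real^'n^'n" assume "psd B \<and> (\<forall>k j. k \<notin> {} \<longrightarrow> B$k$j = 0)"
    thus "\<exists>u::'n \<Rightarrow> real^'n. (\<forall>k. k \<notin> {} \<longrightarrow> u k = 0) \<and> (\<forall>i j. B$i$j = (\<Sum>m\<in>UNIV. u m $ i * u m $ j))"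
      by (intro exI[of _ "\<lambda>_. 0"]) simp
  qed
next
  case (insert k S)
  show ?case
  proof (intro allI impI)
    fix B :: "real^'n^'n" assume H: "psd B \<and> (\<forall>i j. i \<notin> insert k S \<longrightarrow> B$i$j = 0)"
    hence B: "psd B" and Bz: "\<And>i j. i \<notin> insert k S \<Longrightarrow> B$i$j = 0" by auto
    show "\<exists>u::'n \<Rightarrow> real^'n. (\<forall>m. m \<notin> insert k S \<longrightarrow> u m = 0) \<and> (\<forall>i j. B$i$j = (\<Sum>m\<in>UNIV. u m $ i * u m $ j))"
    proof (cases "B$k$k = 0")
      case True
      have "\<forall>i j. i \<notin> S \<longrightarrow> B$i$j = 0"
        using Bz psd_zero_diag[OF B True] by (metis insertE)
      then obtain u :: "'n \<Rightarrow> real^'n" where u: "\<forall>m. m \<notin> S \<longrightarrow> u m = 0" "\<forall>i j. B$i$j = (\<Sum>m\<in>UNIV. u m $ i * u m $ j)"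
        using insert.IH B by blast
      thus ?thesis by auto
    next
      case False
      hence a: "0 < B$k$k" using psd_diag_nonneg[OF B, of k] by simp
      define B' where "B' = B - (\<chi> i j. B$k$i * B$k$j / B$k$k)"
      have B'p: "psd B'" unfolding B'_def by (rule schur_psd[OF B a])
      have B'z: "\<forall>i j. i \<notin> S \<longrightarrow> B'$i$j = 0"
      proof (intro allI impI)
        fix i j assume i: "i \<notin> S"
        show "B'$i$j = 0"
        proof (cases "i = k")
          case True thus ?thesis using a by (simp add: B'_def)
        next
          case False
          hence "B$i$j = 0" "B$k$i = 0" using Bz i psd_sym[OF B, of k i] by auto
          thus ?thesis by (simp add: B'_def)
        qed
      qed
      then obtain u :: "'n \<Rightarrow> real^'n" where u: "\<forall>m. m \<notin> S \<longrightarrow> u m = 0" "\<forall>i j. B'$i$j = (\<Sum>m\<in>UNIV. u m $ i * u m $ j)"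
        using insert.IH B'p by blast
      define v where "v = (1 / sqrt (B$k$k)) *\<^sub>R (\<chi> j. B$k$j)"
      define u' where "u' = u(k := v)"
      have uk: "u k = 0" using u(1) insert.hyps(2) by blast
      have "B$i$j = (\<Sum>m\<in>UNIV. u' m $ i * u' m $ j)" for i j
      proof -
        have pt: "u' m $ i * u' m $ j = u m $ i * u m $ j + (if m = k then B$k$i * B$k$j / B$k$k else 0)" for m
          using uk a by (simp add: u'_def v_def real_sqrt_mult[symmetric] divide_simps)
        have "(\<Sum>m\<in>UNIV. u' m $ i * u' m $ j) = B'$i$j + B$k$i * B$k$j / B$k$k"
          by (simp add: pt sum.distrib u(2))
        thus ?thesis by (simp add: B'_def)
      qed
      moreover have "\<forall>m. m \<notin> insert k S \<longrightarrow> u' m = 0" using u(1) by (simp add: u'_def)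
      ultimately show ?thesis by blast
    qed
  qed
qed

lemma gram: "psd (B::real^'n^'n) \<Longrightarrow> \<exists>u::'n \<Rightarrow> real^'n. \<forall>i j. B$i$j = (\<Sum>m\<in>UNIV. u m $ i * u m $ j)"
  using gram_aux[of UNIV] by auto



lemma psd_pair:
  fixes A Z :: "real^'n^'n"
  assumes A: "psd A" and Z: "psd Z"
  shows "0 \<le> (\<Sum>i\<in>UNIV. \<Sum>j\<in>UNIV. A$i$j * Z$i$j)"
    and "(\<Sum>i\<in>UNIV. \<Sum>j\<in>UNIV. A$i$j * Z$i$j) = 0 \<Longrightarrow> (\<Sum>l\<in>UNIV. A$i$l * Z$l$j) = 0"
proof -
  obtain u :: "'n \<Rightarrow> real^'n" where u: "\<And>i j. Z$i$j = (\<Sum>m\<in>UNIV. u m $ i * u m $ j)"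
    using gram[OF Z] by blast
  have eq: "(\<Sum>i\<in>UNIV. \<Sum>j\<in>UNIV. A$i$j * Z$i$j) = (\<Sum>m\<in>UNIV. u m \<bullet> (A *v u m))"
  proof -
    have "(\<Sum>i\<in>UNIV. \<Sum>j\<in>UNIV. A$i$j * Z$i$j) = (\<Sum>i\<in>UNIV. \<Sum>j\<in>UNIV. \<Sum>m\<in>UNIV. u m $ i * A$i$j * u m $ j)"
      by (simp add: u sum_distrib_left algebra_simps)
    also have "\<dots> = (\<Sum>i\<in>UNIV. \<Sum>m\<in>UNIV. \<Sum>j\<in>UNIV. u m $ i * A$i$j * u m $ j)"
      by (rule sum.cong[OF refl], rule sum.swap)
    also have "\<dots> = (\<Sum>m\<in>UNIV. \<Sum>i\<in>UNIV. \<Sum>j\<in>UNIV. u m $ i * A$i$j * u m $ j)"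
      by (rule sum.swap)
    also have "\<dots> = (\<Sum>m\<in>UNIV. u m \<bullet> (A *v u m))" by (simp add: bil)
    finally show ?thesis .
  qed
  have nn: "\<And>m. 0 \<le> u m \<bullet> (A *v u m)" using A psd_def by blast
  show "0 \<le> (\<Sum>i\<in>UNIV. \<Sum>j\<in>UNIV. A$i$j * Z$i$j)" unfolding eq using nn by (simp add: sum_nonneg)
  assume "(\<Sum>i\<in>UNIV. \<Sum>j\<in>UNIV. A$i$j * Z$i$j) = 0"
  hence "\<forall>m\<in>UNIV. u m \<bullet> (A *v u m) = 0" unfolding eq using nn
    by (subst sum_nonneg_eq_0_iff[symmetric]) auto
  hence k: "\<And>m. A *v u m = 0" using psd_kernel[OF A] by blast
  have "(\<Sum>l\<in>UNIV. A$i$l * Z$l$j) = (\<Sum>l\<in>UNIV. \<Sum>m\<in>UNIV. A$i$l * u m $ l * u m $ j)"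
    by (simp add: u sum_distrib_left mult.assoc)
  also have "\<dots> = (\<Sum>m\<in>UNIV. \<Sum>l\<in>UNIV. A$i$l * u m $ l * u m $ j)"
    by (rule sum.swap)
  also have "\<dots> = (\<Sum>m\<in>UNIV. (A *v u m)$i * u m $ j)"
    by (simp add: matrix_vector_mult_def sum_distrib_right)
  also have "\<dots> = 0" by (simp add: k)
  finally show "(\<Sum>l\<in>UNIV. A$i$l * Z$l$j) = 0" .
qed



lemma sym_entry: "transpose A = A \<Longrightarrow> A$i$j = A$j$i"
  by (metis transpose_def vec_lambda_beta)

lemma feasible_pert:
  fixes Z :: "real^'n^'n" and x :: "real^'n"
  assumes Z: "sdp_feasible Z" and t: "0 \<le> t" and tx: "\<And>i. t * (x$i)^2 \<le> 1"
  shows "sdp_feasible (\<chi> j i. sqrt (1 - t*(x$j)^2) * Z$j$i * sqrt (1 - t*(x$i)^2) + t * x$j * x$i)"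
proof -
  define d where "d = (\<lambda>i. sqrt (1 - t*(x$i)^2))"
  define Y where "Y = (\<chi> j i. sqrt (1 - t*(x$j)^2) * Z$j$i * sqrt (1 - t*(x$i)^2) + t * x$j * x$i)"
  have Zp: "psd Z" and Zd: "\<And>i. Z$i$i = 1" using Z sdp_feasible_def by auto
  have dd: "d i * d i = 1 - t*(x$i)^2" for i
    unfolding d_def using tx[of i] by simp
  have diag: "Y$i$i = 1" for i
    using dd[of i] Zd[of i] unfolding Y_def d_def by (simp add: power2_eq_square)
  have sym: "transpose Y = Y"
    using psd_sym[OF Zp] by (simp add: Y_def vec_eq_iff transpose_def mult.commute)
  have "0 \<le> y \<bullet> (Y *v y)" for y
  proof -
    define z where "z = (\<chi> i. d i * y$i)"
    have "y \<bullet> (Y *v y) = (\<Sum>i\<in>UNIV. \<Sum>j\<in>UNIV. z$i * Z$i$j * z$j + t * ((x$i * y$i) * (x$j * y$j)))"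
      by (simp add: bil Y_def z_def d_def algebra_simps)
    also have "\<dots> = z \<bullet> (Z *v z) + t * ((\<Sum>i\<in>UNIV. x$i * y$i) * (\<Sum>j\<in>UNIV. x$j * y$j))"
      unfolding sum_product[of "\<lambda>i. x$i * y$i" UNIV "\<lambda>j. x$j * y$j" UNIV]
      by (simp only: bil sum.distrib sum_distrib_left)
    also have "\<dots> \<ge> 0"
      using Zp psd_def t by (metis add_nonneg_nonneg mult_nonneg_nonneg zero_le_square)
    finally show ?thesis .
  qed
  thus ?thesis unfolding sdp_feasible_def psd_def Y_def[symmetric] using diag sym by blast
qed



lemma frob_eq: "frob C Y = (\<Sum>i\<in>UNIV. \<Sum>j\<in>UNIV. C$i$j * Y$j$i)"
  by (simp add: frob_def trace_def matrix_matrix_mult_def)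

lemma first_order:
  fixes C Z :: "real^'n^'n" and x :: "real^'n"
  assumes symC: "transpose C = C"
    and feasZ: "sdp_feasible Z"
    and optZ: "\<forall>Y. sdp_feasible Y \<longrightarrow> frob C Y \<le> frob C Z"
  shows "(\<Sum>i\<in>UNIV. \<Sum>j\<in>UNIV. C$i$j * Z$j$i * (x$i * x$i)) \<ge> (\<Sum>i\<in>UNIV. \<Sum>j\<in>UNIV. C$i$j * (x$j * x$i))"
proof -
  define Y where "Y = (\<lambda>t. (\<chi> j i. sqrt (1 - t*(x$j)^2) * Z$j$i * sqrt (1 - t*(x$i)^2) + t * x$j * x$i) :: real^'n^'n)"
  define f where "f = (\<lambda>t. \<Sum>i\<in>UNIV. \<Sum>j\<in>UNIV. C$i$j * (sqrt (1 - t*(x$j)^2) * Z$j$i * sqrt (1 - t*(x$i)^2) + t * x$j * x$i))"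
  have fY: "f t = frob C (Y t)" for t by (simp add: f_def Y_def frob_eq)
  have f0: "f 0 = frob C Z" by (simp add: f_def frob_eq)
  define D where "D = (\<Sum>i\<in>UNIV. \<Sum>j\<in>UNIV. C$i$j * ((- ((x$j)^2) / 2) * Z$j$i + Z$j$i * (- ((x$i)^2) / 2) + x$j * x$i))"
  have der: "DERIV f 0 :> D"
    unfolding f_def D_def
    apply (rule derivative_eq_intros refl | simp)+
    apply (simp add: algebra_simps)
    done
  have D0: "D \<le> 0"
  proof (rule ccontr)
    assume "\<not> D \<le> 0"
    hence "0 < D" by simp
    from DERIV_pos_inc_right[OF der this] obtain d where d: "d > 0" "\<And>h. h > 0 \<Longrightarrow> h < d \<Longrightarrow> f 0 < f (0 + h)"
      by blast
    define S where "S = (\<Sum>i\<in>UNIV. (x$i)^2)"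
    have S0: "0 \<le> S" unfolding S_def by (simp add: sum_nonneg)
    define h where "h = min (d/2) (1/(1+S))"
    have h0: "0 < h" "h < d" using d(1) S0 by (auto simp: h_def)
    have hx: "h * (x$i)^2 \<le> 1" for i
    proof -
      have xs: "(x$i)^2 \<le> S" unfolding S_def by (rule member_le_sum) auto
      have "h \<le> 1/(1+S)" by (simp add: h_def)
      hence "h * (x$i)^2 \<le> 1/(1+S) * (x$i)^2" by (rule mult_right_mono) simp
      also have "\<dots> \<le> 1" using xs S0 by (simp add: field_simps)
      finally show ?thesis .
    qed
    have "sdp_feasible (Y h)" unfolding Y_def
      by (rule feasible_pert[OF feasZ]) (use h0 hx in auto)
    hence "f h \<le> f 0" using optZ fY f0 by metis
    moreover have "f 0 < f h" using d(2)[OF h0] by simp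
    ultimately show False by simp
  qed
  define P where "P = (\<Sum>i\<in>UNIV. \<Sum>j\<in>UNIV. C$i$j * Z$j$i * (x$j * x$j))"
  define Q where "Q = (\<Sum>i\<in>UNIV. \<Sum>j\<in>UNIV. C$i$j * Z$j$i * (x$i * x$i))"
  define R where "R = (\<Sum>i\<in>UNIV. \<Sum>j\<in>UNIV. C$i$j * (x$j * x$i))"
  have Zp: "psd Z" using feasZ sdp_feasible_def by auto
  have PQ: "P = Q"
  proof -
    have "P = (\<Sum>j\<in>UNIV. \<Sum>i\<in>UNIV. C$i$j * Z$j$i * (x$j * x$j))" unfolding P_def by (rule sum.swap)
    also have "\<dots> = Q" unfolding Q_def
      by (intro sum.cong refl) (metis sym_entry[OF symC] psd_sym[OF Zp])
    finally show ?thesis .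
  qed
  have "D = R - P/2 - Q/2"
    by (simp add: D_def R_def P_def Q_def sum_subtractf sum_divide_distrib power2_eq_square algebra_simps sum.distrib)
  thus ?thesis using D0 PQ by (simp add: Q_def R_def)
qed



lemma if_mult_delta: "(if i = j then a else 0) * (b::real) = (if i = j then a * b else 0)" by simp

lemma Diag_mult: "Diag w *v x = (\<chi> i. w$i * x$i)"
  by (simp add: Diag_def matrix_vector_mult_def vec_eq_iff if_mult_delta)

lemma diag_pair: "(\<Sum>i\<in>UNIV. \<Sum>j\<in>UNIV. (Diag v - C)$i$j * Z$i$j) = (\<Sum>i\<in>UNIV. v$i * Z$i$i) - (\<Sum>i\<in>UNIV. \<Sum>j\<in>UNIV. C$i$j * Z$i$j)"
  by (simp add: Diag_def left_diff_distrib sum_subtractf if_mult_delta)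

theorem lemmaC1:
  fixes C Z :: "real^'n^'n" and w :: "real^'n"
  assumes symC: "transpose C = C"
    and feasZ: "sdp_feasible Z"
    and optZ: "\<forall>Y. sdp_feasible Y \<longrightarrow> frob C Y \<le> frob C Z"
    and w_def: "w = (\<chi> i. (column i Z \<bullet> (Z *v column i C)) / (column i Z \<bullet> column i Z))"
  shows "psd (Diag w - C) \<and>
         (\<forall>v::real^'n. psd (Diag v - C) \<longrightarrow> (\<Sum>i\<in>UNIV. w $ i) \<le> (\<Sum>i\<in>UNIV. v $ i))"
proof -
  have Zp: "psd Z" and Zd: "\<And>i. Z$i$i = 1" using feasZ sdp_feasible_def by auto
  have Cs: "\<And>i j. C$i$j = C$j$i" using sym_entry[OF symC] by blast
  have Zs: "\<And>i j. Z$i$j = Z$j$i" using psd_sym[OF Zp] by blast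
  define \<mu> where "\<mu> = (\<chi> i. \<Sum>j\<in>UNIV. C$i$j * Z$j$i)"
  have Dsym: "transpose (Diag v - C) = Diag v - C" for v
    using Cs by (simp add: Diag_def vec_eq_iff transpose_def)
  have Apsd: "psd (Diag \<mu> - C)"
  proof -
    have "0 \<le> x \<bullet> ((Diag \<mu> - C) *v x)" for x
    proof -
      have "x \<bullet> ((Diag \<mu> - C) *v x) = (\<Sum>i\<in>UNIV. \<mu>$i * (x$i * x$i)) - x \<bullet> (C *v x)"
      proof -
        have "x \<bullet> (Diag \<mu> *v x) = (\<Sum>i\<in>UNIV. \<mu>$i * (x$i * x$i))"
          by (simp add: Diag_mult inner_vec_def algebra_simps)
        thus ?thesis by (simp add: matrix_vector_mult_diff_rdistrib inner_diff_right)
      qed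
      also have "(\<Sum>i\<in>UNIV. \<mu>$i * (x$i * x$i)) = (\<Sum>i\<in>UNIV. \<Sum>j\<in>UNIV. C$i$j * Z$j$i * (x$i * x$i))"
        by (simp add: \<mu>_def sum_distrib_right)
      also have "x \<bullet> (C *v x) = (\<Sum>i\<in>UNIV. \<Sum>j\<in>UNIV. C$i$j * (x$j * x$i))"
        by (simp add: bil algebra_simps)
      finally show ?thesis using first_order[OF symC feasZ optZ, of x] by simp
    qed
    thus ?thesis unfolding psd_def using Dsym by blast
  qed
  have CZ: "(\<Sum>i\<in>UNIV. \<Sum>j\<in>UNIV. C$i$j * Z$i$j) = (\<Sum>i\<in>UNIV. \<mu>$i)"
    by (simp add: \<mu>_def Zs)
  have pair0: "(\<Sum>i\<in>UNIV. \<Sum>j\<in>UNIV. (Diag \<mu> - C)$i$j * Z$i$j) = 0"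
    unfolding diag_pair by (simp add: Zd CZ)
  have stat: "\<mu>$i * Z$i$j = (\<Sum>l\<in>UNIV. C$i$l * Z$l$j)" for i j
  proof -
    have "(\<Sum>l\<in>UNIV. (Diag \<mu> - C)$i$l * Z$l$j) = 0" by (rule psd_pair(2)[OF Apsd Zp pair0])
    thus ?thesis by (simp add: Diag_def left_diff_distrib sum_subtractf if_mult_delta)
  qed
  have w\<mu>: "w = \<mu>"
  proof -
    have "w$i = \<mu>$i" for i
    proof -
      have "column i Z \<bullet> (Z *v column i C) = (\<Sum>j\<in>UNIV. Z$j$i * (\<Sum>l\<in>UNIV. Z$j$l * C$l$i))"
        by (simp add: column_def inner_vec_def matrix_vector_mult_def)
      also have "\<dots> = (\<Sum>j\<in>UNIV. Z$j$i * (\<mu>$i * Z$i$j))"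
      proof (rule sum.cong[OF refl])
        fix j
        have "(\<Sum>l\<in>UNIV. Z$j$l * C$l$i) = (\<Sum>l\<in>UNIV. C$i$l * Z$l$j)"
          by (rule sum.cong[OF refl]) (metis Cs Zs mult.commute)
        also have "\<dots> = \<mu>$i * Z$i$j" using stat by simp
        finally show "Z$j$i * (\<Sum>l\<in>UNIV. Z$j$l * C$l$i) = Z$j$i * (\<mu>$i * Z$i$j)" by simp
      qed
      also have "\<dots> = \<mu>$i * (column i Z \<bullet> column i Z)"
        by (simp add: column_def inner_vec_def sum_distrib_left Zs algebra_simps)
      finally have num: "column i Z \<bullet> (Z *v column i C) = \<mu>$i * (column i Z \<bullet> column i Z)" .
      have "column i Z \<noteq> 0" using Zd[of i] by (metis column_def vec_lambda_beta zero_index zero_neq_one)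
      hence "column i Z \<bullet> column i Z \<noteq> 0" by simp
      thus ?thesis using num by (simp add: w_def)
    qed
    thus ?thesis by (simp add: vec_eq_iff)
  qed
  show ?thesis
  proof (intro conjI allI impI)
    show "psd (Diag w - C)" using Apsd w\<mu> by simp
  next
    fix v :: "real^'n" assume "psd (Diag v - C)"
    from psd_pair(1)[OF this Zp] have "0 \<le> (\<Sum>i\<in>UNIV. v$i) - (\<Sum>i\<in>UNIV. \<mu>$i)"
      unfolding diag_pair by (simp add: Zd CZ)
    thus "(\<Sum>i\<in>UNIV. w $ i) \<le> (\<Sum>i\<in>UNIV. v $ i)" using w\<mu> by simp
  qed
qed


end
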